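(* The number of IP-SEG graphs on the labeled vertex set $\{1,\dots,n\}$ is at most $2^{O(n\log n)}$; more precisely, each IP-SEG graph on $n$ vertices can be encoded by assigning $O(\log n)$ bits to each vertex such that adjacency of two vertices is determined by their two labels alone (an implicit representation).
   Context: Let $L_1$ and $L_2$ be two distinct parallel horizontal lines in the plane. A closed straight line segment is an interval segment if both of its endpoints lie on the same line $L_i$, and a permutation segment if one endpoint lies on $L_1$ and the other on $L_2$. An IP-SEG model is a finite family of interval and permutation segments; its intersection graph has one vertex per segment, two vertices being adjacent iff the corresponding segments have nonempty intersection. A graph is an IP-SEG graph if it is isomorphic to the intersection graph of some IP-SEG model. *)

theory Defs
  imports "HOL-Analysis.Analysis"
begin

type_synonym pt = "real \<times> real"

definition seg_set :: "pt \<times> pt \<Rightarrow> pt set" where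
  "seg_set s = closed_segment (fst s) (snd s)"

definition is_interval_seg :: "real \<Rightarrow> real \<Rightarrow> pt \<times> pt \<Rightarrow> bool" where
  "is_interval_seg y1 y2 s \<longleftrightarrow> fst s \<noteq> snd s \<and>
     ((snd (fst s) = y1 \<and> snd (snd s) = y1) \<or> (snd (fst s) = y2 \<and> snd (snd s) = y2))"

definition is_perm_seg :: "real \<Rightarrow> real \<Rightarrow> pt \<times> pt \<Rightarrow> bool" where
  "is_perm_seg y1 y2 s \<longleftrightarrow>
     (snd (fst s) = y1 \<and> snd (snd s) = y2) \<or> (snd (fst s) = y2 \<and> snd (snd s) = y1)"

definition ipseg_model :: "real \<Rightarrow> real \<Rightarrow> 'i set \<Rightarrow> ('i \<Rightarrow> pt \<times> pt) \<Rightarrow> bool" where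
  "ipseg_model y1 y2 I s \<longleftrightarrow> y1 \<noteq> y2 \<and> finite I \<and>
     (\<forall>i\<in>I. is_interval_seg y1 y2 (s i) \<or> is_perm_seg y1 y2 (s i))"

definition intersection_graph :: "'i set \<Rightarrow> ('i \<Rightarrow> pt \<times> pt) \<Rightarrow> ('i \<times> 'i) set" where
  "intersection_graph I s = {(u, v). u \<in> I \<and> v \<in> I \<and> u \<noteq> v \<and> seg_set (s u) \<inter> seg_set (s v) \<noteq> {}}"

definition ipseg_graph_on :: "nat \<Rightarrow> (nat \<times> nat) set \<Rightarrow> bool" where
  "ipseg_graph_on n E \<longleftrightarrow>
     (\<exists>(I :: nat set) y1 y2 s f. ipseg_model y1 y2 I s \<and> bij_betw f {1..n} I \<and>
        E = {(u, v). u \<in> {1..n} \<and> v \<in> {1..n} \<and> (f u, f v) \<in> intersection_graph I s})"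

end

theory Submission
  imports Defs "HOL-Library.FuncSet"
begin

lemma mem_cs: "((x::real), (y::real)) \<in> closed_segment (a, c) (b, d) \<longleftrightarrow>
   (\<exists>u. 0 \<le> u \<and> u \<le> 1 \<and> x = (1-u)*a + u*b \<and> y = (1-u)*c + u*d)"
  by (auto simp: closed_segment_def)

lemma mem_cs_real: "(x::real) \<in> closed_segment a b \<longleftrightarrow> (\<exists>u. 0 \<le> u \<and> u \<le> 1 \<and> x = (1-u)*a + u*b)"
  by (auto simp: closed_segment_def)

lemma hmem: "((x::real), (y::real)) \<in> closed_segment (a, c) (b, c) \<longleftrightarrow> y = c \<and> min a b \<le> x \<and> x \<le> max a b"
proof -
  have "((x, y) \<in> closed_segment (a, c) (b, c)) = (y = c \<and> x \<in> closed_segment a b)"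
    unfolding mem_cs mem_cs_real by (auto simp: algebra_simps)
  then show ?thesis by (auto simp: closed_segment_eq_real_ivl split: if_splits)
qed

lemma pmem1: assumes "y1 \<noteq> y2"
  shows "((x::real), (y1::real)) \<in> closed_segment (a, y1) (b, y2) \<longleftrightarrow> x = a"
proof
  assume "(x, y1) \<in> closed_segment (a, y1) (b, y2)"
  then obtain u where u: "0 \<le> u" "u \<le> 1" "x = (1-u)*a + u*b" "y1 = (1-u)*y1 + u*y2"
    unfolding mem_cs by blast
  then have "u * (y2 - y1) = 0" by (simp only: algebra_simps)
  with assms have "u = 0" by (metis eq_iff_diff_eq_0 mult_eq_0_iff)
  with u show "x = a" by simp
qed auto

lemma pmem2: assumes "y1 \<noteq> y2"
  shows "((x::real), (y2::real)) \<in> closed_segment (a, y1) (b, y2) \<longleftrightarrow> x = b"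
proof
  assume "(x, y2) \<in> closed_segment (a, y1) (b, y2)"
  then obtain u where u: "0 \<le> u" "u \<le> 1" "x = (1-u)*a + u*b" "y2 = (1-u)*y1 + u*y2"
    unfolding mem_cs by blast
  then have "(1-u) * (y2 - y1) = 0" by (simp only: algebra_simps)
  with assms have "u = 1" by (metis eq_iff_diff_eq_0 mult_eq_0_iff)
  with u show "x = b" by simp
qed auto

lemma pp_suff:
  assumes "(a::real) \<le> a'" "b' \<le> b" and "(y1::real) = y1" "(y2::real) = y2"
  shows "\<exists>x y. (x,y) \<in> closed_segment (a,y1) (b,y2) \<and> (x,y) \<in> closed_segment (a',y1) (b',y2)"
proof (cases "a - a' = b - b'")
  case True
  then have "a = a'" "b = b'" using assms by auto
  then show ?thesis by (intro exI[of _ a] exI[of _ y1]) auto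
next
  case False
  define d1 where "d1 = a - a'"
  define d2 where "d2 = b - b'"
  define u where "u = - d1 / (d2 - d1)"
  have pos: "d2 - d1 > 0" using assms False d1_def d2_def by auto
  have u0: "0 \<le> u" using pos assms by (auto simp: u_def d1_def)
  have u1: "u \<le> 1" using pos assms by (auto simp: u_def d1_def d2_def field_simps)
  have key: "d1 + u * (d2 - d1) = 0" using pos by (simp add: u_def field_simps)
  have "(1-u)*a + u*b = (1-u)*a' + u*b'" using key by (simp add: d1_def d2_def algebra_simps)
  then show ?thesis using u0 u1
    by (intro exI[of _ "(1-u)*a + u*b"] exI[of _ "(1-u)*y1 + u*y2"]) (auto simp: mem_cs)
qed

lemma pp: assumes "y1 \<noteq> y2"
  shows "(\<exists>x y. ((x::real),(y::real)) \<in> closed_segment (a,y1) (b,y2) \<and> (x,y) \<in> closed_segment (a',y1) (b',y2))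
    \<longleftrightarrow> (a \<le> a' \<and> b' \<le> b) \<or> (a' \<le> a \<and> b \<le> b')"
proof
  assume "\<exists>x y. (x,y) \<in> closed_segment (a,y1) (b,y2) \<and> (x,y) \<in> closed_segment (a',y1) (b',y2)"
  then obtain u v where u: "0 \<le> u" "u \<le> 1" "0 \<le> v" "v \<le> 1"
    "(1-u)*a + u*b = (1 - v) * a' + v * b'" "(1-u)*y1 + u*y2 = (1 - v) * y1 + v * y2"
    unfolding mem_cs by metis
  then have "(u - v) * (y2 - y1) = 0" by (simp add: algebra_simps)
  with assms have "u = v" by simp
  with u have e: "(1-u)*(a-a') + u*(b-b') = 0" by (simp add: algebra_simps)
  show "(a \<le> a' \<and> b' \<le> b) \<or> (a' \<le> a \<and> b \<le> b')"
  proof (rule ccontr)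
    assume "\<not> ?thesis"
    then have "(a < a' \<and> b < b') \<or> (a' < a \<and> b' < b)" by auto
    then show False
    proof
      assume h: "a < a' \<and> b < b'"
      show False
      proof (cases "u = 1")
        case True then show False using e h by simp
      next
        case False
        then have "(1-u)*(a-a') < 0" using u h by (simp add: mult_pos_neg)
        moreover have "u*(b-b') \<le> 0" using u h by (simp add: mult_nonneg_nonpos)
        ultimately show False using e by linarith
      qed
    next
      assume h: "a' < a \<and> b' < b"
      show False
      proof (cases "u = 1")
        case True then show False using e h by simp
      next
        case False
        then have "(1-u)*(a-a') > 0" using u h by simp
        moreover have "u*(b-b') \<ge> 0" using u h by simp
        ultimately show False using e by linarith
      qed
    qed
  qed
next
  assume "(a \<le> a' \<and> b' \<le> b) \<or> (a' \<le> a \<and> b \<le> b')"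
  then show "\<exists>x y. (x,y) \<in> closed_segment (a,y1) (b,y2) \<and> (x,y) \<in> closed_segment (a',y1) (b',y2)"
    using pp_suff[of a a' b' b y1 y2] pp_suff[of a' a b b' y1 y2] by blast
qed


definition btw :: "'a::linorder \<Rightarrow> 'a \<Rightarrow> 'a \<Rightarrow> bool" where
  "btw p q x \<longleftrightarrow> (p \<le> x \<or> q \<le> x) \<and> (x \<le> p \<or> x \<le> q)"

definition ovl :: "'a::linorder \<Rightarrow> 'a \<Rightarrow> 'a \<Rightarrow> 'a \<Rightarrow> bool" where
  "ovl p q p' q' \<longleftrightarrow> (p \<le> p' \<or> p \<le> q' \<or> q \<le> p' \<or> q \<le> q') \<and> (p' \<le> p \<or> p' \<le> q \<or> q' \<le> p \<or> q' \<le> q)"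

fun adjP :: "nat \<times> 'a::linorder \<times> 'a \<Rightarrow> nat \<times> 'a \<times> 'a \<Rightarrow> bool" where
  "adjP (t,p,q) (t',p',q') =
    (if (t = 0 \<and> t' = 0) \<or> (t = 1 \<and> t' = 1) then ovl p q p' q'
     else if t = 2 \<and> t' = 2 then (p \<le> p' \<and> q' \<le> q) \<or> (p' \<le> p \<and> q \<le> q')
     else if t = 0 \<and> t' = 2 then btw p q p'
     else if t = 2 \<and> t' = 0 then btw p' q' p
     else if t = 1 \<and> t' = 2 then btw p q q'
     else if t = 2 \<and> t' = 1 then btw p' q' q
     else False)"

definition segdata :: "real \<Rightarrow> real \<Rightarrow> pt \<times> pt \<Rightarrow> nat \<times> real \<times> real" where
  "segdata y1 y2 s = (let a = fst (fst s); ya = snd (fst s); b = fst (snd s); yb = snd (snd s) in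
     if ya = y1 \<and> yb = y1 then (0, a, b) else if ya = y2 \<and> yb = y2 then (1, a, b)
     else if ya = y1 then (2, a, b) else (2, b, a))"

fun shape :: "real \<Rightarrow> real \<Rightarrow> nat \<times> real \<times> real \<Rightarrow> pt set" where
  "shape y1 y2 (t,p,q) = (if t = 0 then closed_segment (p,y1) (q,y1)
     else if t = 1 then closed_segment (p,y2) (q,y2) else closed_segment (p,y1) (q,y2))"

lemma seg_shape:
  assumes "y1 \<noteq> y2" "is_interval_seg y1 y2 s \<or> is_perm_seg y1 y2 s"
  shows "seg_set s = shape y1 y2 (segdata y1 y2 s) \<and> fst (segdata y1 y2 s) \<le> 2
    \<and> fst (snd (segdata y1 y2 s)) \<in> {fst (fst s), fst (snd s)}
    \<and> snd (snd (segdata y1 y2 s)) \<in> {fst (fst s), fst (snd s)}"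
proof -
  obtain a ya b yb where s: "s = ((a,ya),(b,yb))" by (metis prod.collapse)
  show ?thesis using assms
    by (auto simp: s segdata_def seg_set_def is_interval_seg_def is_perm_seg_def closed_segment_commute)
qed

lemma ne_iff: "(A \<inter> B \<noteq> {}) \<longleftrightarrow> (\<exists>x y. ((x::real),(y::real)) \<in> A \<and> (x,y) \<in> B)"
  by auto

lemma btw_real: "btw p q (x::real) \<longleftrightarrow> min p q \<le> x \<and> x \<le> max p q"
  by (auto simp: btw_def)

lemma ovl_real: "(\<exists>x. min p q \<le> x \<and> x \<le> max p q \<and> min p' q' \<le> x \<and> x \<le> max p' q') \<longleftrightarrow> ovl p q p' (q'::real)"
proof
  assume "ovl p q p' q'"
  then show "\<exists>x. min p q \<le> x \<and> x \<le> max p q \<and> min p' q' \<le> x \<and> x \<le> max p' q'"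
    by (intro exI[of _ "max (min p q) (min p' q')"]) (auto simp: ovl_def)
qed (auto simp: ovl_def)

lemma shape_int:
  assumes "y1 \<noteq> y2" "t \<le> 2" "t' \<le> 2"
  shows "(shape y1 y2 (t,p,q) \<inter> shape y1 y2 (t',p',q') \<noteq> {}) \<longleftrightarrow> adjP (t,p,q) (t',p',q')"
proof -
  have "t = 0 \<or> t = 1 \<or> t = 2" "t' = 0 \<or> t' = 1 \<or> t' = 2" using assms by auto
  then show ?thesis
  proof (elim disjE)
    assume "t = 0" "t' = 0"
    then show ?thesis unfolding ne_iff using ovl_real[of p q p' q'] by (auto simp: hmem)
  next
    assume "t = 1" "t' = 1"
    then show ?thesis unfolding ne_iff using ovl_real[of p q p' q'] by (auto simp: hmem)
  next
    assume "t = 0" "t' = 1"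
    then show ?thesis using assms unfolding ne_iff by (auto simp: hmem)
  next
    assume "t = 1" "t' = 0"
    then show ?thesis using assms unfolding ne_iff by (auto simp: hmem)
  next
    assume "t = 2" "t' = 2"
    then show ?thesis using assms unfolding ne_iff by (simp add: pp)
  next
    assume "t = 0" "t' = 2"
    then show ?thesis using assms unfolding ne_iff by (auto simp: hmem pmem1 btw_real)
  next
    assume "t = 2" "t' = 0"
    then show ?thesis using assms unfolding ne_iff by (auto simp: hmem pmem1 btw_real)
  next
    assume "t = 1" "t' = 2"
    then show ?thesis using assms unfolding ne_iff by (auto simp: hmem pmem2 btw_real)
  next
    assume "t = 2" "t' = 1"
    then show ?thesis using assms unfolding ne_iff by (auto simp: hmem pmem2 btw_real)
  qed
qed

lemma adjP_transfer:
  assumes "\<And>x y. x \<in> X \<Longrightarrow> y \<in> X \<Longrightarrow> (g x \<le> g y \<longleftrightarrow> x \<le> y)"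
    "p \<in> X" "q \<in> X" "p' \<in> X" "q' \<in> X"
  shows "adjP (t, g p, g q) (t', g p', g q') = adjP (t,p,q) (t',p',q')"
  using assms by (simp add: btw_def ovl_def)


definition bits :: "nat \<Rightarrow> nat \<Rightarrow> bool list" where
  "bits w k = map (bit k) [0..<w]"

lemma length_bits[simp]: "length (bits w k) = w"
  by (simp add: bits_def)

lemma bits_inj:
  assumes "p < 2^w" "q < 2^w" "bits w p = bits w q"
  shows "p = q"
proof -
  have p: "take_bit w p = p" and q: "take_bit w q = q" using assms by (simp_all add: take_bit_nat_eq_self_iff)
  have "\<And>i. i < w \<Longrightarrow> bit p i = bit q i"
  proof -
    fix i assume "i < w"
    then have "bits w p ! i = bits w q ! i" using assms(3) by simp
    then show "bit p i = bit q i" using \<open>i < w\<close> by (simp add: bits_def)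
  qed
  then have "take_bit w p = take_bit w q" by (intro bit_eqI) (auto simp: bit_take_bit_iff)
  then show ?thesis using p q by simp
qed

definition enc :: "nat \<Rightarrow> nat \<Rightarrow> nat \<Rightarrow> nat \<Rightarrow> bool list" where
  "enc w t p q = bits 2 t @ bits w p @ bits w q"

lemma length_enc[simp]: "length (enc w t p q) = 2 + 2 * w"
  by (simp add: enc_def)

lemma enc_inj:
  assumes "enc w t p q = enc w' t' p' q'" "t < 4" "p < 2^w" "q < 2^w" "t' < 4" "p' < 2^w'" "q' < 2^w'"
  shows "t = t' \<and> p = p' \<and> q = q'"
proof -
  have "length (enc w t p q) = length (enc w' t' p' q')" using assms(1) by simp
  then have ww: "w = w'" by simp
  have "bits 2 t = bits 2 t' \<and> bits w p = bits w p' \<and> bits w q = bits w q'"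
    using assms(1) unfolding enc_def ww by (simp add: append_eq_append_conv)
  then show ?thesis using assms bits_inj[of t 2 t'] bits_inj[of p w p'] bits_inj[of q w q'] ww by auto
qed

definition D :: "bool list \<Rightarrow> bool list \<Rightarrow> bool" where
  "D a b \<longleftrightarrow> (\<exists>w t p q w' t' p' q'. a = enc w t p q \<and> b = enc w' t' p' q' \<and> t < 4 \<and> p < 2^w \<and> q < 2^w
     \<and> t' < 4 \<and> p' < 2^w' \<and> q' < 2^w' \<and> adjP (t,p,q) (t',p',q'))"

lemma D_enc:
  assumes "t < 4" "p < 2^w" "q < 2^w" "t' < 4" "p' < 2^w'" "q' < 2^w'"
  shows "D (enc w t p q) (enc w' t' p' q') \<longleftrightarrow> adjP (t,p,q) (t',p',q')"
proof
  assume "D (enc w t p q) (enc w' t' p' q')"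
  then obtain w1 t1 p1 q1 w1' t1' p1' q1' where h: "enc w t p q = enc w1 t1 p1 q1" "enc w' t' p' q' = enc w1' t1' p1' q1'"
    "t1 < 4" "p1 < 2^w1" "q1 < 2^w1" "t1' < 4" "p1' < 2^w1'" "q1' < 2^w1'" "adjP (t1,p1,q1) (t1',p1',q1')"
    unfolding D_def by blast
  have "t = t1 \<and> p = p1 \<and> q = q1" using enc_inj[OF h(1)] assms h by blast
  moreover have "t' = t1' \<and> p' = p1' \<and> q' = q1'" using enc_inj[OF h(2)] assms h by blast
  ultimately show "adjP (t,p,q) (t',p',q')" using h(9) by simp
next
  assume "adjP (t,p,q) (t',p',q')"
  then show "D (enc w t p q) (enc w' t' p' q')" unfolding D_def using assms by blast
qed

definition wd :: "nat \<Rightarrow> nat" where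
  "wd n = nat \<lceil>log 2 (real n + 1)\<rceil> + 1"

definition K :: "nat \<Rightarrow> nat" where
  "K n = 2 + 2 * wd n"

lemma wd_bound: "2 * n < 2 ^ wd n"
proof -
  define L where "L = log 2 (real n + 1)"
  have L0: "L \<ge> 0" unfolding L_def by simp
  have "real n + 1 = 2 powr L" unfolding L_def by simp
  also have "\<dots> \<le> 2 powr (real (nat \<lceil>L\<rceil>))" using L0 by (intro powr_mono) auto
  also have "\<dots> = 2 ^ nat \<lceil>L\<rceil>" by (simp add: powr_realpow)
  finally have "real n + 1 \<le> 2 ^ nat \<lceil>L\<rceil>" .
  then have "n + 1 \<le> (2::nat) ^ nat \<lceil>L\<rceil>"
    by (metis of_nat_1 of_nat_add of_nat_le_iff of_nat_numeral of_nat_power)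
  then show ?thesis unfolding wd_def L_def by simp
qed

lemma K_bound: assumes "n \<ge> 1" shows "real (K n) \<le> 8 * log 2 (real n + 1)"
proof -
  define L where "L = log 2 (real n + 1)"
  have L1: "L \<ge> 1" unfolding L_def using assms by simp
  have "real (wd n) \<le> L + 2" unfolding wd_def L_def[symmetric] using L1
    by (simp add: of_nat_nat) linarith
  then show ?thesis unfolding K_def L_def[symmetric] using L1 by simp
qed


lemma labeling:
  assumes "ipseg_graph_on n E"
  shows "\<exists>lab. (\<forall>v\<in>{1..n}. length (lab v) = K n) \<and>
     (\<forall>u\<in>{1..n}. \<forall>v\<in>{1..n}. u \<noteq> v \<longrightarrow> ((u, v) \<in> E \<longleftrightarrow> D (lab u) (lab v))) \<and>
     E \<subseteq> {(u,v). u \<in> {1..n} \<and> v \<in> {1..n} \<and> u \<noteq> v}"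
proof -
  obtain I :: "nat set" and y1 y2 s f where m: "ipseg_model y1 y2 I s" and bij: "bij_betw f {1..n} I"
    and E: "E = {(u, v). u \<in> {1..n} \<and> v \<in> {1..n} \<and> (f u, f v) \<in> intersection_graph I s}"
    using assms unfolding ipseg_graph_on_def by blast
  have y12: "y1 \<noteq> y2" and finI: "finite I" and valid: "\<And>i. i \<in> I \<Longrightarrow> is_interval_seg y1 y2 (s i) \<or> is_perm_seg y1 y2 (s i)"
    using m unfolding ipseg_model_def by auto
  have cardI: "card I = n" using bij_betw_same_card[OF bij] by simp
  have inj: "inj_on f {1..n}" and fI: "\<And>v. v \<in> {1..n} \<Longrightarrow> f v \<in> I"
    using bij by (auto simp: bij_betw_def)
  define X where "X = (\<lambda>i. fst (fst (s i))) ` I \<union> (\<lambda>i. fst (snd (s i))) ` I"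
  define r where "r x = card {z\<in>X. z < x}" for x
  have finX: "finite X" unfolding X_def using finI by simp
  have cardX: "card X \<le> 2 * n"
  proof -
    have "card X \<le> card ((\<lambda>i. fst (fst (s i))) ` I) + card ((\<lambda>i. fst (snd (s i))) ` I)"
      unfolding X_def by (rule card_Un_le)
    also have "\<dots> \<le> card I + card I" by (intro add_mono card_image_le finI)
    finally show ?thesis using cardI by simp
  qed
  have rmono: "r x < r y" if "x \<in> X" "y \<in> X" "x < y" for x y
  proof -
    have "{z\<in>X. z < x} \<subset> {z\<in>X. z < y}" using that by auto
    then show ?thesis unfolding r_def by (intro psubset_card_mono) (auto simp: finX)
  qed
  have riff: "r x \<le> r y \<longleftrightarrow> x \<le> y" if "x \<in> X" "y \<in> X" for x y
    using rmono[OF that] rmono[OF that(2,1)] by (cases x y rule: linorder_cases) auto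
  have rb: "r x < 2 ^ wd n" if "x \<in> X" for x
  proof -
    have "{z\<in>X. z < x} \<subset> X" using that by auto
    then have "r x < card X" unfolding r_def by (intro psubset_card_mono finX)
    then show ?thesis using cardX wd_bound[of n] by linarith
  qed
  define dd where "dd v = segdata y1 y2 (s (f v))" for v
  define lab where "lab v = enc (wd n) (fst (dd v)) (r (fst (snd (dd v)))) (r (snd (snd (dd v))))" for v
  have ddp: "seg_set (s (f v)) = shape y1 y2 (dd v) \<and> fst (dd v) \<le> 2 \<and> fst (snd (dd v)) \<in> X \<and> snd (snd (dd v)) \<in> X"
    if "v \<in> {1..n}" for v
    using seg_shape[OF y12 valid[OF fI[OF that]]] fI[OF that] unfolding dd_def X_def by auto
  have adj: "(u, v) \<in> E \<longleftrightarrow> D (lab u) (lab v)" if u: "u \<in> {1..n}" and v: "v \<in> {1..n}" and uv: "u \<noteq> v" for u v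
  proof -
    obtain t p q where tu: "dd u = (t,p,q)" by (metis prod.collapse)
    obtain t' p' q' where tv: "dd v = (t',p',q')" by (metis prod.collapse)
    have fuv: "f u \<noteq> f v" using inj u v uv by (auto dest: inj_onD)
    have "(u, v) \<in> E \<longleftrightarrow> seg_set (s (f u)) \<inter> seg_set (s (f v)) \<noteq> {}"
      unfolding E intersection_graph_def using u v fuv fI by auto
    also have "\<dots> \<longleftrightarrow> shape y1 y2 (t,p,q) \<inter> shape y1 y2 (t',p',q') \<noteq> {}"
      using ddp[OF u] ddp[OF v] tu tv by simp
    also have "\<dots> \<longleftrightarrow> adjP (t,p,q) (t',p',q')"
      using shape_int[OF y12] ddp[OF u] ddp[OF v] tu tv by simp
    also have "\<dots> \<longleftrightarrow> adjP (t, r p, r q) (t', r p', r q')"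
      using adjP_transfer[of X r p q p' q' t t'] riff ddp[OF u] ddp[OF v] tu tv by simp
    also have "\<dots> \<longleftrightarrow> D (lab u) (lab v)"
      unfolding lab_def tu tv using D_enc[of t "r p" "wd n" "r q" t' "r p'" "wd n" "r q'"]
        rb ddp[OF u] ddp[OF v] tu tv by simp
    finally show ?thesis .
  qed
  have sub: "E \<subseteq> {(u,v). u \<in> {1..n} \<and> v \<in> {1..n} \<and> u \<noteq> v}"
    unfolding E intersection_graph_def by auto
  show ?thesis
    by (intro exI[of _ lab] conjI ballI impI sub) (auto simp: lab_def K_def adj)
qed


lemma card_bool_lists: "card {xs :: bool list. length xs = k} = 2 ^ k"
  using card_lists_length_eq[of "UNIV :: bool set" k] by (simp add: card_UNIV_bool)

lemma fin_bool_lists: "finite {xs :: bool list. length xs = k}"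
  using finite_lists_length_eq[of "UNIV :: bool set" k] by simp

lemma count_bound: "card {E. ipseg_graph_on n E} \<le> 2 ^ (K n * n)"
proof -
  define F where "F = {E. ipseg_graph_on n E}"
  define P where "P E lab \<longleftrightarrow> (\<forall>v\<in>{1..n}. length (lab v) = K n) \<and>
     (\<forall>u\<in>{1..n}. \<forall>v\<in>{1..n}. u \<noteq> v \<longrightarrow> ((u, v) \<in> E \<longleftrightarrow> D (lab u) (lab v))) \<and>
     E \<subseteq> {(u,v). u \<in> {1..n} \<and> v \<in> {1..n} \<and> u \<noteq> v}" for E lab
  define lf where "lf E = (SOME lab. P E lab)" for E
  have Plf: "P E (lf E)" if "E \<in> F" for E
  proof -
    have "\<exists>lab. P E lab" using labeling[of n E] that unfolding F_def P_def by simp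
    then show ?thesis unfolding lf_def by (rule someI_ex)
  qed
  have Eeq: "E = {(u,v). u \<in> {1..n} \<and> v \<in> {1..n} \<and> u \<noteq> v \<and> D (lf E u) (lf E v)}" if "E \<in> F" for E
    using Plf[OF that] unfolding P_def by auto
  define T where "T = PiE {1..n} (\<lambda>_. {xs :: bool list. length xs = K n})"
  have "inj_on (\<lambda>E. restrict (lf E) {1..n}) F"
  proof (rule inj_onI)
    fix E1 E2 assume h: "E1 \<in> F" "E2 \<in> F" "restrict (lf E1) {1..n} = restrict (lf E2) {1..n}"
    have "\<And>v. v \<in> {1..n} \<Longrightarrow> lf E1 v = lf E2 v" using h(3) by (metis restrict_apply')
    then have "{(u,v). u \<in> {1..n} \<and> v \<in> {1..n} \<and> u \<noteq> v \<and> D (lf E1 u) (lf E1 v)}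
       = {(u,v). u \<in> {1..n} \<and> v \<in> {1..n} \<and> u \<noteq> v \<and> D (lf E2 u) (lf E2 v)}" by auto
    then show "E1 = E2" using Eeq[OF h(1)] Eeq[OF h(2)] by simp
  qed
  moreover have "(\<lambda>E. restrict (lf E) {1..n}) ` F \<subseteq> T"
    using Plf unfolding T_def P_def by auto
  moreover have "finite T" unfolding T_def by (intro finite_PiE) (auto simp: fin_bool_lists)
  ultimately have "card F \<le> card T" by (intro card_inj_on_le)
  also have "card T = (2 ^ K n) ^ n" unfolding T_def by (simp add: card_PiE card_bool_lists)
  also have "\<dots> = 2 ^ (K n * n)" by (simp add: power_mult)
  finally show ?thesis unfolding F_def .
qed

theorem mainTheorem2:
  shows "\<exists>c::real. c > 0 \<and>
    (\<forall>n::nat. real (card {E. ipseg_graph_on n E}) \<le> 2 powr (c * real n * log 2 (real n + 1))) \<and>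
    (\<exists>D :: bool list \<Rightarrow> bool list \<Rightarrow> bool. \<forall>n E. ipseg_graph_on n E \<longrightarrow>
       (\<exists>lab :: nat \<Rightarrow> bool list.
          (\<forall>v\<in>{1..n}. real (length (lab v)) \<le> c * log 2 (real n + 1)) \<and>
          (\<forall>u\<in>{1..n}. \<forall>v\<in>{1..n}. u \<noteq> v \<longrightarrow> ((u, v) \<in> E \<longleftrightarrow> D (lab u) (lab v)))))"
proof (intro exI[of _ "8::real"] conjI allI impI exI[of _ D])
  fix n :: nat
  have "real (card {E. ipseg_graph_on n E}) \<le> real ((2::nat) ^ (K n * n))"
    using count_bound[of n] by linarith
  also have "\<dots> = 2 powr (real (K n) * real n)"
    by (simp add: powr_realpow[symmetric])
  also have "\<dots> \<le> 2 powr (8 * real n * log 2 (real n + 1))"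
  proof (cases "n = 0")
    case True then show ?thesis by simp
  next
    case False
    then have "real (K n) \<le> 8 * log 2 (real n + 1)" using K_bound by simp
    then have "real (K n) * real n \<le> 8 * log 2 (real n + 1) * real n" by (intro mult_right_mono) auto
    then show ?thesis by (intro powr_mono) (auto simp: mult_ac)
  qed
  finally show "real (card {E. ipseg_graph_on n E}) \<le> 2 powr (8 * real n * log 2 (real n + 1))" .
next
  fix n E assume "ipseg_graph_on n E"
  then obtain lab where l: "\<forall>v\<in>{1..n}. length (lab v) = K n"
    "\<forall>u\<in>{1..n}. \<forall>v\<in>{1..n}. u \<noteq> v \<longrightarrow> ((u, v) \<in> E \<longleftrightarrow> D (lab u) (lab v))"
    using labeling by blast
  show "\<exists>lab :: nat \<Rightarrow> bool list.
          (\<forall>v\<in>{1..n}. real (length (lab v)) \<le> 8 * log 2 (real n + 1)) \<and>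
          (\<forall>u\<in>{1..n}. \<forall>v\<in>{1..n}. u \<noteq> v \<longrightarrow> ((u, v) \<in> E \<longleftrightarrow> D (lab u) (lab v)))"
    using l K_bound by (intro exI[of _ lab]) auto
qed simp

end
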